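(* Let two probabilistically equivalent models (each one of the linear dynamic models described in the context) be written in stacked form as $$T_1x=v,\qquad T_2y=w,$$ where $x,y$ are zero-mean nonsingular Gaussian sequences over $[0,N]$, $T_1,T_2$ are nonsingular matrices determined by the model parameters, and $v,w$ are the zero-mean Gaussian vectors of dynamic noise and boundary values with nonsingular covariances $\mathrm{Cov}(v)=P_1$, $\mathrm{Cov}(w)=P_2$. If $$T_2'P_2^{-1}w=T_1'P_1^{-1}v,$$ then the two models are algebraically equivalent, i.e. $x=y$.
   Context: Sequences are indexed by $[0,N]=(0,1,\ldots,N)$, $x_k\in\mathbb{R}^d$, $'$ denotes transpose. The models considered are linear dynamic models of the following types: forward/backward Markov, reciprocal ($R^0_kx_k-R^-_kx_{k-1}-R^+_kx_{k+1}=e^R_k$ plus boundary equations), and forward/backward $CM_L$ and $CM_F$ models ($x_k=G_{k,k-1}x_{k-1}+G_{k,c}x_c+e_k$, $c\in\{0,N\}$, plus boundary equations); each such model with its boundary condition can be written as $Tx=v$, $T$ nonsingular, $v$ stacking the dynamic noise and boundary values. Two models $T_1x=v$, $T_2y=w$ are probabilistically equivalent (PE) if $x$ and $y$ have the same distribution (equivalently $T_2'P_2^{-1}T_2=T_1'P_1^{-1}T_1$), and algebraically equivalent (AE) if $x=y$ (path-wise). *)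

theory Defs
  imports "HOL-Probability.Probability"
begin

text \<open>Characterised via
  Cramer-Wold: every nontrivial linear functional a . X is N(0, a' C a).\<close>
definition zm_gaussian :: "'a measure \<Rightarrow> ('a \<Rightarrow> real^'n) \<Rightarrow> real^'n^'n \<Rightarrow> bool" where
  "zm_gaussian M X C \<longleftrightarrow>
     X \<in> borel_measurable M \<and> transpose C = C \<and>
     (\<forall>a::real^'n. a \<noteq> 0 \<longrightarrow>
        0 < a \<bullet> (C *v a) \<and>
        distr M lborel (\<lambda>\<omega>. a \<bullet> X \<omega>) = density lborel (normal_density 0 (sqrt (a \<bullet> (C *v a)))))"

definition prob_equiv :: "'a measure \<Rightarrow> ('a \<Rightarrow> real^'n) \<Rightarrow> ('a \<Rightarrow> real^'n) \<Rightarrow> bool" where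
  "prob_equiv M x y \<longleftrightarrow> distr M borel x = distr M borel y"

end

theory Submission
  imports Defs
begin

lemma minv:
  fixes A :: "real^'n^'n"
  assumes "invertible A"
  shows "A ** matrix_inv A = mat 1" "matrix_inv A ** A = mat 1"
proof -
  have "\<exists>A'. A ** A' = mat 1 \<and> A' ** A = mat 1" using assms unfolding invertible_def by blast
  from someI_ex[OF this] show "A ** matrix_inv A = mat 1" "matrix_inv A ** A = mat 1"
    unfolding matrix_inv_def by auto
qed

lemma sym_dot:
  fixes D :: "real^'n^'n"
  assumes "transpose D = D"
  shows "b \<bullet> (D *v a) = a \<bullet> (D *v b)"
proof -
  have "b \<bullet> (D *v a) = (D *v a) \<bullet> b" by (simp add: inner_commute)
  also have "\<dots> = (a v* transpose D) \<bullet> b" by simp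
  also have "\<dots> = a \<bullet> (D *v b)" using assms dot_lmul_matrix by metis
  finally show ?thesis .
qed

lemma quad_eq:
  fixes C1 C2 :: "real^'n^'n"
  assumes "transpose C1 = C1" "transpose C2 = C2"
    and "\<And>a. a \<bullet> (C1 *v a) = a \<bullet> (C2 *v a)"
  shows "C1 = C2"
proof -
  define D where "D = C1 - C2"
  have sD: "transpose D = D" using assms unfolding D_def
    by (simp add: transpose_def vec_eq_iff)
  have q: "a \<bullet> (D *v a) = 0" for a
    using assms(3)[of a] unfolding D_def by (simp add: matrix_vector_mult_diff_rdistrib inner_diff_right)
  have "D *v b = 0" for b
  proof -
    define a where "a = D *v b"
    have "(a+b) \<bullet> (D *v (a+b)) = 0" by (rule q)
    hence "a \<bullet> (D *v a) + a \<bullet> (D *v b) + b \<bullet> (D *v a) + b \<bullet> (D *v b) = 0"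
      by (simp add: matrix_vector_right_distrib inner_add_left inner_add_right)
    hence "2 * (a \<bullet> (D *v b)) = 0" using q[of a] q[of b] sym_dot[OF sD, of b a] by simp
    hence "a \<bullet> a = 0" unfolding a_def by simp
    thus ?thesis unfolding a_def by simp
  qed
  hence "D = 0" by (simp add: matrix_eq)
  thus ?thesis unfolding D_def by simp
qed

lemma second_moment:
  fixes s :: real
  assumes "0 < s"
  shows "integral\<^sup>L (density lborel (normal_density 0 s)) (\<lambda>x. x^2) = s^2"
proof -
  have "integral\<^sup>L (density lborel (normal_density 0 s)) (\<lambda>x. x^2)
      = integral\<^sup>L lborel (\<lambda>x. normal_density 0 s x * (x - 0)^(2*1))"
    by (subst integral_density) auto
  also have "\<dots> = s^2" by (subst integral_normal_moment_even, use assms in \<open>auto simp: numeral_2_eq_2\<close>)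
  finally show ?thesis .
qed

lemma cov_formula:
  fixes M :: "'a measure" and x v :: "'a \<Rightarrow> real^'n" and T P :: "real^'n^'n"
  assumes "invertible T" "zm_gaussian M v P" "\<forall>\<omega>\<in>space M. T *v x \<omega> = v \<omega>"
    and "a \<noteq> 0"
  shows "distr M lborel (\<lambda>\<omega>. a \<bullet> x \<omega>) = density lborel (normal_density 0
     (sqrt (a \<bullet> ((matrix_inv T ** P ** transpose (matrix_inv T)) *v a))))"
    and "0 < a \<bullet> ((matrix_inv T ** P ** transpose (matrix_inv T)) *v a)"
proof -
  define S where "S = matrix_inv T"
  define b where "b = transpose S *v a"
  have xS: "x \<omega> = S *v v \<omega>" if "\<omega> \<in> space M" for \<omega>
  proof -
    have "S *v v \<omega> = S *v (T *v x \<omega>)" using assms(3) that by simp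
    also have "\<dots> = x \<omega>" using minv(2)[OF assms(1)] unfolding S_def
      by (simp add: matrix_vector_mul_assoc)
    finally show ?thesis by simp
  qed
  have ax: "a \<bullet> x \<omega> = b \<bullet> v \<omega>" if "\<omega> \<in> space M" for \<omega>
    using xS[OF that] unfolding b_def by (simp add: dot_lmul_matrix)
  have "b \<noteq> 0"
  proof
    assume "b = 0"
    hence "transpose T *v b = 0" by simp
    moreover have "transpose T *v b = transpose (S ** T) *v a" unfolding b_def
      by (simp only: matrix_vector_mul_assoc matrix_transpose_mul)
    hence "transpose T *v b = a"
      using minv(2)[OF assms(1)] unfolding S_def by simp
    ultimately show False using assms(4) by simp
  qed
  hence G: "0 < b \<bullet> (P *v b)" "distr M lborel (\<lambda>\<omega>. b \<bullet> v \<omega>) = density lborel (normal_density 0 (sqrt (b \<bullet> (P *v b))))"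
    using assms(2) unfolding zm_gaussian_def by auto
  have q: "b \<bullet> (P *v b) = a \<bullet> ((S ** P ** transpose S) *v a)"
    unfolding b_def
    by (metis dot_lmul_matrix matrix_vector_mul_assoc transpose_matrix_vector)
  have "distr M lborel (\<lambda>\<omega>. a \<bullet> x \<omega>) = distr M lborel (\<lambda>\<omega>. b \<bullet> v \<omega>)"
    by (rule distr_cong) (auto simp: ax)
  then show "distr M lborel (\<lambda>\<omega>. a \<bullet> x \<omega>) = density lborel (normal_density 0
     (sqrt (a \<bullet> ((matrix_inv T ** P ** transpose (matrix_inv T)) *v a))))"
    using G q S_def by simp
  show "0 < a \<bullet> ((matrix_inv T ** P ** transpose (matrix_inv T)) *v a)"
    using G q S_def by simp
qed

lemma P_inv:
  fixes P :: "real^'n^'n"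
  assumes "zm_gaussian M v P"
  shows "invertible P"
proof -
  have "\<forall>a. P *v a = 0 \<longrightarrow> a = 0"
  proof (intro allI impI, rule ccontr)
    fix a assume "P *v a = 0" "a \<noteq> 0"
    thus False using assms unfolding zm_gaussian_def by force
  qed
  thus ?thesis unfolding invertible_left_inverse matrix_left_invertible_ker[symmetric] .
qed

lemma C_sym:
  fixes S P :: "real^'n^'n"
  assumes "transpose P = P"
  shows "transpose (S ** P ** transpose S) = S ** P ** transpose S"
  using assms by (simp add: matrix_transpose_mul matrix_mul_assoc)

lemma C_A:
  fixes T P :: "real^'n^'n"
  assumes "invertible T" "invertible P"
  shows "(matrix_inv T ** P ** transpose (matrix_inv T)) ** (transpose T ** matrix_inv P ** T) = mat 1"
proof -
  define S where "S = matrix_inv T"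
  have 1: "transpose S ** transpose T = mat 1"
    using minv(1)[OF assms(1)] unfolding S_def by (metis matrix_transpose_mul transpose_mat)
  have "(S ** P ** transpose S) ** (transpose T ** matrix_inv P ** T)
      = S ** P ** (transpose S ** transpose T) ** matrix_inv P ** T"
    by (simp add: matrix_mul_assoc)
  also have "\<dots> = S ** (P ** matrix_inv P) ** T" by (simp add: 1 matrix_mul_assoc)
  also have "\<dots> = mat 1" using minv[OF assms(2)] minv(2)[OF assms(1)] unfolding S_def by simp
  finally show ?thesis unfolding S_def .
qed

theorem proposition2:
  fixes M :: "'a measure"
    and x y v w :: "'a \<Rightarrow> real^'n"
    and T1 T2 P1 P2 :: "real^'n^'n"
  assumes "prob_space M"
    and "invertible T1" and "invertible T2"
    and "\<exists>Cx. zm_gaussian M x Cx" and "\<exists>Cy. zm_gaussian M y Cy"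
    and "zm_gaussian M v P1" and "zm_gaussian M w P2"
    and "\<forall>\<omega>\<in>space M. T1 *v x \<omega> = v \<omega>"
    and "\<forall>\<omega>\<in>space M. T2 *v y \<omega> = w \<omega>"
    and "prob_equiv M x y"
    and "\<forall>\<omega>\<in>space M. (transpose T2 ** matrix_inv P2) *v w \<omega> = (transpose T1 ** matrix_inv P1) *v v \<omega>"
  shows "\<forall>\<omega>\<in>space M. x \<omega> = y \<omega>"
proof -
  define C1 where "C1 = matrix_inv T1 ** P1 ** transpose (matrix_inv T1)"
  define C2 where "C2 = matrix_inv T2 ** P2 ** transpose (matrix_inv T2)"
  have xm: "x \<in> borel_measurable M" using assms(4) unfolding zm_gaussian_def by auto
  have ym: "y \<in> borel_measurable M" using assms(5) unfolding zm_gaussian_def by auto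
  have eqd: "distr M lborel (\<lambda>\<omega>. a \<bullet> x \<omega>) = distr M lborel (\<lambda>\<omega>. a \<bullet> y \<omega>)" for a
  proof -
    have m: "(\<lambda>z::real^'n. a \<bullet> z) \<in> borel \<rightarrow>\<^sub>M lborel" by simp
    have "distr M lborel (\<lambda>\<omega>. a \<bullet> x \<omega>) = distr (distr M borel x) lborel (\<lambda>z. a \<bullet> z)"
      using distr_distr[OF m xm] by (simp add: comp_def)
    also have "\<dots> = distr (distr M borel y) lborel (\<lambda>z. a \<bullet> z)"
      using assms(10) unfolding prob_equiv_def by simp
    also have "\<dots> = distr M lborel (\<lambda>\<omega>. a \<bullet> y \<omega>)"
      using distr_distr[OF m ym] by (simp add: comp_def)
    finally show ?thesis .
  qed
  have q: "a \<bullet> (C1 *v a) = a \<bullet> (C2 *v a)" for a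
  proof (cases "a = 0")
    case True thus ?thesis by simp
  next
    case False
    note c1 = cov_formula[OF assms(2) assms(6) assms(8) False, folded C1_def]
    note c2 = cov_formula[OF assms(3) assms(7) assms(9) False, folded C2_def]
    have "density lborel (normal_density 0 (sqrt (a \<bullet> (C1 *v a))))
        = density lborel (normal_density 0 (sqrt (a \<bullet> (C2 *v a))))"
      using c1(1) c2(1) eqd[of a] by metis
    hence "integral\<^sup>L (density lborel (normal_density 0 (sqrt (a \<bullet> (C1 *v a))))) (\<lambda>x. x^2)
        = integral\<^sup>L (density lborel (normal_density 0 (sqrt (a \<bullet> (C2 *v a))))) (\<lambda>x. x^2)"
      by (rule arg_cong)
    hence "(sqrt (a \<bullet> (C1 *v a)))^2 = (sqrt (a \<bullet> (C2 *v a)))^2"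
      using c1(2) c2(2) by (simp only: second_moment real_sqrt_gt_zero)
    thus ?thesis using c1(2) c2(2) by simp
  qed
  have CC: "C1 = C2"
    by (rule quad_eq[OF _ _ q]) (use assms(6,7) in \<open>auto simp: C1_def C2_def zm_gaussian_def intro!: C_sym\<close>)
  have I1: "C1 ** (transpose T1 ** matrix_inv P1 ** T1) = mat 1"
    unfolding C1_def by (rule C_A[OF assms(2) P_inv[OF assms(6)]])
  have I2: "C2 ** (transpose T2 ** matrix_inv P2 ** T2) = mat 1"
    unfolding C2_def by (rule C_A[OF assms(3) P_inv[OF assms(7)]])
  show ?thesis
  proof
    fix \<omega> assume om: "\<omega> \<in> space M"
    have "x \<omega> = C1 *v ((transpose T1 ** matrix_inv P1) *v (T1 *v x \<omega>))"
      using I1 by (simp add: matrix_vector_mul_assoc matrix_mul_assoc)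
    also have "\<dots> = C1 *v ((transpose T1 ** matrix_inv P1) *v v \<omega>)" using assms(8) om by simp
    also have "\<dots> = C2 *v ((transpose T2 ** matrix_inv P2) *v w \<omega>)" using assms(11) om CC by simp
    also have "\<dots> = C2 *v ((transpose T2 ** matrix_inv P2) *v (T2 *v y \<omega>))" using assms(9) om by simp
    also have "\<dots> = y \<omega>"
      using I2 by (simp add: matrix_vector_mul_assoc matrix_mul_assoc)
    finally show "x \<omega> = y \<omega>" .
  qed
qed

end
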